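(* Let $i\ge 7$ be an odd integer such that $(i+1)/2$ is even. Then for every $t\in\{1,\dots,\tfrac{i-3}{4}\}$, \[S(i)=\left\langle 2,\tfrac{i+1}{2}+2t+1\right\rangle\cap\bigcap_{k=t}^{(i-3)/4}T\!\left(\tfrac{i+1}{2}+2k+1\right),\] and this intersection is a factorization of $S(i)$ into irreducible numerical semigroups (i.e. it cannot be refined).
   Context: $\mathbb{N}$ denotes the non-negative integers. A numerical semigroup is a submonoid of $(\mathbb{N},+)$ with finite complement. A numerical semigroup is irreducible if it cannot be written as the intersection of two numerical semigroups properly containing it. $\langle a,b\rangle=\{xa+yb:x,y\in\mathbb{N}\}$; for $b$ odd, $\langle 2,b\rangle$ is irreducible. For an odd integer $j\ge 3$, $T(j)=\{0,\tfrac{j+1}{2},\tfrac{j+1}{2}+1,\dots,j-1\}\cup\{n\in\mathbb{Z}:n\ge j+1\}$; each $T(j)$ is an irreducible numerical semigroup. For odd $i\ge5$, $S(i)=\langle 2,i\rangle\cap T(i)$. Given a numerical semigroup $S$ and irreducible numerical semigroups $S_1,\dots,S_n$, the expression $S_1\cap\dots\cap S_n$ is a factorization of $S$ (of length $n$) if $S=S_1\cap\dots\cap S_n$ and $S\neq\bigcap_{j\in J}S_j$ for every nonempty proper subset $J\subsetneq\{1,\dots,n\}$. *)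

theory Defs
  imports Main
begin

definition numerical_semigroup :: "nat set \<Rightarrow> bool" where
  "numerical_semigroup S \<longleftrightarrow> 0 \<in> S \<and> (\<forall>x\<in>S. \<forall>y\<in>S. x + y \<in> S) \<and> finite (UNIV - S)"

definition irreducible_ns :: "nat set \<Rightarrow> bool" where
  "irreducible_ns S \<longleftrightarrow> numerical_semigroup S \<and>
     \<not> (\<exists>A B. numerical_semigroup A \<and> numerical_semigroup B \<and> S \<subset> A \<and> S \<subset> B \<and> S = A \<inter> B)"

definition gen2 :: "nat \<Rightarrow> nat \<Rightarrow> nat set" where
  "gen2 a b = {x * a + y * b | x y. True}"

definition T :: "nat \<Rightarrow> nat set" where
  "T j = {0} \<union> {(j + 1) div 2 ..< j} \<union> {j + 1 ..}"

definition S :: "nat \<Rightarrow> nat set" where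
  "S i = gen2 2 i \<inter> T i"

definition is_factorization :: "nat set \<Rightarrow> nat set list \<Rightarrow> bool" where
  "is_factorization X Ss \<longleftrightarrow> Ss \<noteq> [] \<and> (\<forall>j<length Ss. irreducible_ns (Ss ! j)) \<and>
     X = (\<Inter>j\<in>{..<length Ss}. Ss ! j) \<and>
     (\<forall>J. J \<noteq> {} \<and> J \<subset> {..<length Ss} \<longrightarrow> X \<noteq> (\<Inter>j\<in>J. Ss ! j))"

end

theory Submission
  imports Defs
begin

lemma gen2_odd: assumes "odd b" shows "x \<in> gen2 2 b \<longleftrightarrow> even x \<or> b \<le> x"
proof
  assume "x \<in> gen2 2 b"
  then obtain u v where x: "x = u*2 + v*b" unfolding gen2_def by blast
  show "even x \<or> b \<le> x"
  proof (cases "v = 0")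
    case True then show ?thesis using x by simp
  next
    case False then have "v*b \<ge> b" by simp
    then show ?thesis using x by linarith
  qed
next
  assume h: "even x \<or> b \<le> x"
  show "x \<in> gen2 2 b"
  proof (cases "even x")
    case True
    then have "x = (x div 2)*2 + 0*b" by simp
    then show ?thesis unfolding gen2_def by blast
  next
    case False
    then have "b \<le> x" using h by simp
    then have "even (x - b)" using False assms by simp
    then have "x = ((x-b) div 2)*2 + 1*b" using \<open>b \<le> x\<close> by simp
    then show ?thesis unfolding gen2_def by blast
  qed
qed

lemma T_mem: "x \<in> T j \<longleftrightarrow> x = 0 \<or> ((j+1) div 2 \<le> x \<and> x \<noteq> j)"
  unfolding T_def by auto

lemma irr_crit:
  assumes "numerical_semigroup X" "g \<notin> X"
    "\<And>A. numerical_semigroup A \<Longrightarrow> X \<subset> A \<Longrightarrow> g \<in> A"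
  shows "irreducible_ns X"
  unfolding irreducible_ns_def using assms by blast

lemma ns_gen2: assumes "odd b" shows "numerical_semigroup (gen2 2 b)"
proof -
  have "finite (UNIV - gen2 2 b)"
    by (rule finite_subset[of _ "{..<b}"]) (auto simp: gen2_odd[OF assms])
  moreover have "\<forall>x\<in>gen2 2 b. \<forall>y\<in>gen2 2 b. x + y \<in> gen2 2 b"
    by (auto simp: gen2_odd[OF assms])
  ultimately show ?thesis unfolding numerical_semigroup_def by (simp add: gen2_odd[OF assms])
qed

lemma ns_T: assumes "odd j" shows "numerical_semigroup (T j)"
proof -
  have "finite (UNIV - T j)"
    by (rule finite_subset[of _ "{..j}"]) (auto simp: T_mem)
  moreover have "\<forall>x\<in>T j. \<forall>y\<in>T j. x + y \<in> T j"
  proof (intro ballI)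
    fix x y assume "x \<in> T j" "y \<in> T j"
    then consider "x = 0" | "y = 0" | "(j+1) div 2 \<le> x" "(j+1) div 2 \<le> y" by (auto simp: T_mem)
    then show "x + y \<in> T j"
    proof cases
      case 3
      have "j < (j+1) div 2 + (j+1) div 2" using assms by (elim oddE) simp
      then show ?thesis using 3 by (simp add: T_mem)
    qed (use \<open>x \<in> T j\<close> \<open>y \<in> T j\<close> in auto)
  qed
  ultimately show ?thesis unfolding numerical_semigroup_def by (simp add: T_mem)
qed

lemma irr_gen2: assumes "odd b" "3 \<le> b" shows "irreducible_ns (gen2 2 b)"
proof (rule irr_crit[OF ns_gen2[OF assms(1)], of "b - 2"])
  show "b - 2 \<notin> gen2 2 b" using assms by (simp add: gen2_odd)
  fix A assume A: "numerical_semigroup A" "gen2 2 b \<subset> A"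
  then obtain x where x: "x \<in> A" "x \<notin> gen2 2 b" by blast
  then have xo: "odd x" "x < b" by (auto simp: gen2_odd[OF assms(1)])
  then have "x \<le> b - 2" using assms by presburger
  have "even (b - 2 - x)" using xo assms \<open>x \<le> b - 2\<close> by simp
  then have "b - 2 - x \<in> gen2 2 b" by (simp add: gen2_odd[OF assms(1)])
  then have "b - 2 - x \<in> A" using A by blast
  then have "x + (b - 2 - x) \<in> A" using A x unfolding numerical_semigroup_def by blast
  moreover have "x + (b - 2 - x) = b - 2" using \<open>x \<le> b - 2\<close> by simp
  ultimately show "b - 2 \<in> A" by simp
qed

lemma irr_T: assumes "odd j" "3 \<le> j" shows "irreducible_ns (T j)"
proof (rule irr_crit[OF ns_T[OF assms(1)], of j])
  show "j \<notin> T j" using assms by (simp add: T_mem)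
  fix A assume A: "numerical_semigroup A" "T j \<subset> A"
  then obtain x where x: "x \<in> A" "x \<notin> T j" by blast
  show "j \<in> A"
  proof (cases "x = j")
    case True then show ?thesis using x by simp
  next
    case False
    then have xs: "0 < x" "x < (j+1) div 2" using x by (auto simp: T_mem)
    then have "j - x \<in> T j" using assms by (simp add: T_mem) presburger
    then have "j - x \<in> A" using A by blast
    then have "x + (j - x) \<in> A" using A x unfolding numerical_semigroup_def by blast
    then show ?thesis using xs by simp
  qed
qed

lemma S_mem: "x \<in> S (4*m+3) \<longleftrightarrow> x = 0 \<or> (even x \<and> 2*m+2 \<le> x) \<or> (odd x \<and> 4*m+5 \<le> x)"
proof -
  have o: "odd (4*m+3::nat)" by presburger
  have d: "(4*m+3+1) div 2 = 2*m+(2::nat)" by simp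
  show ?thesis unfolding S_def Int_iff gen2_odd[OF o] T_mem d by presburger
qed

lemma Tk_mem: "x \<in> T (2*m+2+2*k+1) \<longleftrightarrow> x = 0 \<or> (m+k+2 \<le> x \<and> x \<noteq> 2*m+2*k+3)"
proof -
  have "(2*m+2+2*k+1+1) div 2 = m+k+2" by simp
  then show ?thesis unfolding T_mem by (simp only:) (auto simp del: One_nat_def)
qed

lemma main_eq:
  assumes "1 \<le> m" "1 \<le> t" "t \<le> m"
  shows "S (4*m+3) = gen2 2 (2*m+2 + 2*t + 1) \<inter> (\<Inter>k\<in>{t..m}. T (2*m+2 + 2*k + 1))"
proof (rule set_eqI)
  fix x
  have o: "odd (2*m+2+2*t+1)" by simp
  show "x \<in> S (4*m+3) \<longleftrightarrow> x \<in> gen2 2 (2*m+2 + 2*t + 1) \<inter> (\<Inter>k\<in>{t..m}. T (2*m+2 + 2*k + 1))"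
  proof
    assume "x \<in> S (4*m+3)"
    then have h: "x = 0 \<or> (even x \<and> 2*m+2 \<le> x) \<or> (odd x \<and> 4*m+5 \<le> x)" by (simp add: S_mem)
    have "x \<in> gen2 2 (2*m+2 + 2*t + 1)" unfolding gen2_odd[OF o] using h assms by auto
    moreover have "x \<in> T (2*m+2 + 2*k + 1)" if "k \<in> {t..m}" for k
      unfolding Tk_mem using h that by auto
    ultimately show "x \<in> gen2 2 (2*m+2 + 2*t + 1) \<inter> (\<Inter>k\<in>{t..m}. T (2*m+2 + 2*k + 1))" by blast
  next
    assume a: "x \<in> gen2 2 (2*m+2 + 2*t + 1) \<inter> (\<Inter>k\<in>{t..m}. T (2*m+2 + 2*k + 1))"
    then have "x \<in> gen2 2 (2*m+2 + 2*t + 1)" by (rule IntD1)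
    then have g: "even x \<or> 2*m+2+2*t+1 \<le> x" by (simp only: gen2_odd[OF o])
    have tk: "\<And>k. t \<le> k \<Longrightarrow> k \<le> m \<Longrightarrow> x = 0 \<or> (m+k+2 \<le> x \<and> x \<noteq> 2*m+2*k+3)"
  proof -
      fix k assume "t \<le> k" "k \<le> m"
      then have "k \<in> {t..m}" by simp
      then have "x \<in> T (2*m+2 + 2*k + 1)" by (rule INT_D[OF IntD2[OF a]])
      then show "x = 0 \<or> (m+k+2 \<le> x \<and> x \<noteq> 2*m+2*k+3)" by (simp only: Tk_mem)
    qed
    show "x \<in> S (4*m+3)"
    proof (cases "x = 0")
      case False
      have x1: "2*m+2 \<le> x" "x \<noteq> 4*m+3" using tk[of m] assms False by auto
      show ?thesis
      proof (cases "even x")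
        case True then show ?thesis using x1 by (simp add: S_mem)
      next
        case odd: False
        have "4*m+5 \<le> x"
        proof (rule ccontr)
          assume "\<not> 4*m+5 \<le> x"
          moreover have "x \<noteq> 4*m+4"
          proof
            assume "x = 4*m+4"
            then have "even x" by simp
            then show False using odd by simp
          qed
          ultimately have "x \<le> 4*m+3" by linarith
          have "2*m+2+2*t+1 \<le> x" using g odd by (simp only: de_Morgan_disj) simp
          obtain q where q: "x = 2*q+1" using odd by (elim oddE) simp
          define k where "k = q - m - 1"
          have xk: "x = 2*m+2*k+3" unfolding k_def using q \<open>2*m+2+2*t+1 \<le> x\<close> by simp
          have "t \<le> k" "k \<le> m" using xk \<open>x \<le> 4*m+3\<close> \<open>2*m+2+2*t+1 \<le> x\<close> by auto
          then show False using tk[of k] xk False by auto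
        qed
        then show ?thesis using odd by (simp add: S_mem)
      qed
    qed (simp add: S_mem)
  qed
qed

lemma main_fact:
  assumes "1 \<le> m" "1 \<le> t" "t \<le> m"
  shows "is_factorization (S (4*m+3))
           (gen2 2 (2*m+2 + 2*t + 1) # map (\<lambda>k. T (2*m+2 + 2*k + 1)) [t..<m + 1])"
proof -
  define G where "G = gen2 2 (2*m+2 + 2*t + 1)"
  define f where "f = (\<lambda>k. T (2*m+2 + 2*k + 1))"
  define Ss where "Ss = G # map f [t..<m+1]"
  define L where "L = m + 1 - t"
  have len: "length Ss = Suc L" using assms unfolding Ss_def L_def by simp
  have s0: "Ss ! 0 = G" unfolding Ss_def by simp
  have sS: "Ss ! Suc p = f (t + p)" if "p < L" for p
  proof -
    have "p < length [t..<m+1]" using that assms unfolding L_def by simp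
    then have "Ss ! Suc p = f ([t..<m+1] ! p)" unfolding Ss_def by simp
    also have "[t..<m+1] ! p = t + p" by (rule nth_upt) (use that assms in \<open>simp add: L_def\<close>)
    finally show ?thesis .
  qed
  have o: "odd (2*m+2+2*t+1)" by simp
  have irr: "\<forall>j<length Ss. irreducible_ns (Ss ! j)"
  proof (intro allI impI)
    fix j assume "j < length Ss"
    show "irreducible_ns (Ss ! j)"
    proof (cases j)
      case 0 then show ?thesis using s0 irr_gen2[OF o] unfolding G_def by simp
    next
      case (Suc p)
      then have "p < L" using \<open>j < length Ss\<close> len by simp
      then show ?thesis using sS Suc irr_T[of "2*m+2+2*(t+p)+1"] unfolding f_def by simp
    qed
  qed
  have allidx: "(\<forall>j<Suc L. P j) \<longleftrightarrow> P 0 \<and> (\<forall>k\<in>{t..m}. P (Suc (k - t)))" for P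
  proof -
    have "(\<forall>j<Suc L. P j) \<longleftrightarrow> P 0 \<and> (\<forall>p<L. P (Suc p))" by (auto simp: less_Suc_eq_0_disj)
    also have "(\<forall>p<L. P (Suc p)) \<longleftrightarrow> (\<forall>k\<in>{t..m}. P (Suc (k - t)))"
    proof
      assume h: "\<forall>p<L. P (Suc p)"
      show "\<forall>k\<in>{t..m}. P (Suc (k - t))" using h unfolding L_def by auto
    next
      assume h: "\<forall>k\<in>{t..m}. P (Suc (k - t))"
      show "\<forall>p<L. P (Suc p)"
      proof (intro allI impI)
        fix p assume "p < L"
        then have "t + p \<in> {t..m}" unfolding L_def by auto
        then show "P (Suc p)" using h by fastforce
      qed
    qed
    finally show ?thesis .
  qed
  have inter: "S (4*m+3) = (\<Inter>j\<in>{..<length Ss}. Ss ! j)"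
  proof (rule set_eqI)
    fix x
    have "x \<in> (\<Inter>j\<in>{..<length Ss}. Ss ! j) \<longleftrightarrow> (\<forall>j<Suc L. x \<in> Ss ! j)" using len by auto
    also have "\<dots> \<longleftrightarrow> x \<in> Ss ! 0 \<and> (\<forall>k\<in>{t..m}. x \<in> Ss ! Suc (k - t))" by (rule allidx)
    also have "\<dots> \<longleftrightarrow> x \<in> G \<and> (\<forall>k\<in>{t..m}. x \<in> f k)"
    proof -
      have "Ss ! Suc (k - t) = f k" if "k \<in> {t..m}" for k
        using sS[of "k - t"] that unfolding L_def by auto
      then show ?thesis using s0 by auto
    qed
    also have "\<dots> \<longleftrightarrow> x \<in> S (4*m+3)" unfolding main_eq[OF assms] G_def f_def by auto
    finally show "x \<in> S (4*m+3) \<longleftrightarrow> x \<in> (\<Inter>j\<in>{..<length Ss}. Ss ! j)" by simp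
  qed
  have fT: "Ss ! Suc p = T (2*m+2+2*(t+p)+1)" if "p < L" for p
    using sS[OF that] unfolding f_def by simp
  have refine: "\<forall>J. J \<noteq> {} \<and> J \<subset> {..<length Ss} \<longrightarrow> S (4*m+3) \<noteq> (\<Inter>j\<in>J. Ss ! j)"
  proof (intro allI impI)
    fix J assume J: "J \<noteq> {} \<and> J \<subset> {..<length Ss}"
    have Jsub0: "J \<subseteq> {..<length Ss}" using J by (simp only: psubset_eq)
    have Jsub: "j < Suc L" if "j \<in> J" for j
    proof -
      have "j \<in> {..<length Ss}" using Jsub0 that by (rule subsetD)
      then show ?thesis using len by simp
    qed
    show "S (4*m+3) \<noteq> (\<Inter>j\<in>J. Ss ! j)"
    proof (cases "0 \<in> J")
      case False
      have mem: "2*m+3 \<in> Ss ! j" if jJ: "j \<in> J" for j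
      proof -
        obtain p where p: "j = Suc p" using False jJ by (cases j) auto
        have "Suc p < Suc L" using Jsub[OF jJ] p by simp
        then have pL: "p < L" by simp
        then have tp: "t + p \<le> m" unfolding L_def by linarith
        have "m + (t+p) + 2 \<le> 2*m+3" using tp by linarith
        moreover have "2*m+3 \<noteq> 2*m+2*(t+p)+3" using assms(2) by simp
        ultimately have "2*m+3 \<in> T (2*m+2+2*(t+p)+1)"
          by (simp only: Tk_mem[of "2*m+3" m "t+p"]) blast
        then show ?thesis using fT[OF pL] p by simp
      qed
      have "2*m+3 \<in> (\<Inter>j\<in>J. Ss ! j)" using mem by (rule INT_I)
      moreover have "2*m+3 \<notin> S (4*m+3)" unfolding S_mem using assms by auto
      ultimately show ?thesis by metis
    next
      case True
      obtain q where q0: "q \<in> {..<length Ss} - J" using psubset_imp_ex_mem J by metis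
      then have q: "q < length Ss" "q \<notin> J" by auto
      then obtain p where p: "q = Suc p" using True by (cases q) auto
      then have pL: "p < L" using q len by simp
      then have tp: "t + p \<le> m" unfolding L_def by linarith
      define w where "w = 2*m+2*(t+p)+3"
      have mem: "w \<in> Ss ! j" if jJ: "j \<in> J" for j
      proof (cases j)
        case 0
        have "2*m+2+2*t+1 \<le> w" unfolding w_def by simp
        then have "w \<in> G" unfolding G_def gen2_odd[OF o] by blast
        then show ?thesis using s0 0 by simp
      next
        case (Suc p')
        have "Suc p' < Suc L" using Jsub[OF jJ] Suc by simp
        then have p'L: "p' < L" by simp
        have "p' \<noteq> p" using jJ q(2) p Suc by blast
        have tp': "t + p' \<le> m" using p'L unfolding L_def by linarith
        have "m + (t+p') + 2 \<le> w" using tp' unfolding w_def by simp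
        moreover have "w \<noteq> 2*m+2*(t+p')+3" using \<open>p' \<noteq> p\<close> unfolding w_def by simp
        ultimately have "w \<in> T (2*m+2+2*(t+p')+1)"
          by (simp only: Tk_mem[of w m "t+p'"]) blast
        then show ?thesis using fT[OF p'L] Suc by simp
      qed
      have "w \<in> (\<Inter>j\<in>J. Ss ! j)" using mem by (rule INT_I)
      moreover have "w \<notin> S (4*m+3)"
      proof -
        have "odd w" unfolding w_def by simp
        moreover have "w < 4*m+5" unfolding w_def using tp by simp
        moreover have "w \<noteq> 0" unfolding w_def by simp
        ultimately show ?thesis unfolding S_mem by auto
      qed
      ultimately show ?thesis by metis
    qed
  qed
  show ?thesis
    unfolding is_factorization_def G_def[symmetric] f_def[symmetric] Ss_def[symmetric]
    using irr inter refine unfolding Ss_def by simp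
qed

theorem lemma2p3:
  fixes i t :: nat
  assumes "odd i" and "i \<ge> 7" and "even ((i + 1) div 2)"
    and "1 \<le> t" and "t \<le> (i - 3) div 4"
  shows "S i = gen2 2 ((i + 1) div 2 + 2 * t + 1) \<inter>
               (\<Inter>k\<in>{t..(i - 3) div 4}. T ((i + 1) div 2 + 2 * k + 1))
       \<and> is_factorization (S i)
           (gen2 2 ((i + 1) div 2 + 2 * t + 1) #
            map (\<lambda>k. T ((i + 1) div 2 + 2 * k + 1)) [t..<(i - 3) div 4 + 1])"
proof -
  define m where "m = (i - 3) div 4"
  have hi: "i = 4*m+3" unfolding m_def using assms(1,2,3) by presburger
  have h1: "(i + 1) div 2 = 2*m+2" using hi by simp
  have m1: "1 \<le> m" using hi assms(2) by simp
  have tm: "t \<le> m" using assms(5) unfolding m_def .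
  show ?thesis unfolding h1 m_def[symmetric] hi
    using main_eq[OF m1 assms(4) tm] main_fact[OF m1 assms(4) tm] by simp
qed

end
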